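(* Let $M\in\mathbb R^{n\times n}$, $Q\in\mathbb R^{n\times d}$, $q\in\mathbb R^n$, and for $\epsilon\in\mathbb R$ let $S^\epsilon=\{Q\theta+q+\boldsymbol\epsilon:\theta\in\mathbb R^d\}$. For every complementary basis $B$, the set of $\epsilon\in\mathbb R$ such that $S^\epsilon\cap\mathcal C(B)\neq\emptyset$ but $S^\epsilon\cap\operatorname{int}\mathcal C(B)=\emptyset$ is finite.
   Context: $\boldsymbol\epsilon=(\epsilon,\epsilon^2,\dots,\epsilon^n)^T\in\mathbb R^n$ is the lexicographic perturbation vector. Let $A=[\,I\;\;-M\,]\in\mathbb R^{n\times 2n}$, columns indexed by $\{1,\dots,2n\}$; $A_{\cdot J}$ is the submatrix of columns indexed by $J$. Complementary index: $\bar i=i+n$ if $i\le n$, $\bar i=i-n$ if $i>n$. A set $J$ is complementary if $i\in J\Rightarrow\bar i\notin J$. A complementary basis is a complementary set $B$ with $|B|=n$ and $A_{\cdot B}$ invertible. Complementary cone: $\mathcal C(J)=\{A_{\cdot J}\lambda:\lambda\ge0\}$. *)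

theory Defs
  imports "HOL-Analysis.Analysis"
begin

text \<open>Indices 1..n are modelled by a finite, well-ordered type 'n; the k-th smallest
element of 'n plays the role of index k. Columns of A = [I, -M] are indexed by 'n + 'n:
Inl i is column i (identity part), Inr i is column i+n (the -M part).\<close>

definition lexpos :: "'n::{finite,wellorder} \<Rightarrow> nat" where
  "lexpos i = card {j. j < i} + 1"

definition lexvec :: "real \<Rightarrow> real^'n::{finite,wellorder}" where
  "lexvec e = (\<chi> i. e ^ lexpos i)"

definition colA :: "real^'n^'n \<Rightarrow> 'n + 'n \<Rightarrow> real^'n" where
  "colA M j = (case j of Inl i \<Rightarrow> axis i 1 | Inr i \<Rightarrow> - (\<chi> k. M $ k $ i))"

definition compl_idx :: "'n + 'n \<Rightarrow> 'n + 'n" where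
  "compl_idx j = (case j of Inl i \<Rightarrow> Inr i | Inr i \<Rightarrow> Inl i)"

definition complementary :: "('n + 'n) set \<Rightarrow> bool" where
  "complementary J \<longleftrightarrow> (\<forall>i\<in>J. compl_idx i \<notin> J)"

definition compl_basis :: "real^'n^'n \<Rightarrow> ('n::finite + 'n) set \<Rightarrow> bool" where
  "compl_basis M B \<longleftrightarrow> complementary B \<and> card B = CARD('n) \<and>
     (\<exists>\<beta>. bij_betw \<beta> (UNIV :: 'n set) B \<and>
          invertible ((\<chi> k i. colA M (\<beta> i) $ k) :: real^'n^'n))"

definition compl_cone :: "real^'n^'n \<Rightarrow> ('n::finite + 'n) set \<Rightarrow> (real^'n) set" where
  "compl_cone M J = {(\<Sum>j\<in>J. l j *\<^sub>R colA M j) | l. \<forall>j\<in>J. l j \<ge> 0}"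

definition Seps :: "(real^'d::finite)^('n::{finite,wellorder}) \<Rightarrow> real^('n::{finite,wellorder}) \<Rightarrow> real \<Rightarrow> (real^('n::{finite,wellorder})) set" where
  "Seps Q q e = {Q *v \<theta> + q + lexvec e | \<theta>. True}"

end

theory Submission
  imports Defs "HOL-Computational_Algebra.Polynomial"
begin


lemma lexpos_ge1: "lexpos i \<ge> 1"
  by (simp add: lexpos_def)

lemma lexpos_inj: "inj (lexpos :: 'n::{finite,wellorder} \<Rightarrow> nat)"
proof (rule injI)
  fix i j :: 'n assume h: "lexpos i = lexpos j"
  have m: "lexpos i < lexpos j" if "i < j" for i j :: 'n
  proof -
    have "{k. k < i} \<subset> {k. k < j}" using that by auto
    then have "card {k. k < i} < card {k. k < j}" by (intro psubset_card_mono) auto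
    then show ?thesis by (simp add: lexpos_def)
  qed
  show "i = j"
  proof (rule ccontr)
    assume "i \<noteq> j"
    then have "i < j \<or> j < i" by auto
    then show False using m[of i j] m[of j i] h by auto
  qed
qed

lemma poly_fin:
  fixes w :: "real^'n::{finite,wellorder}"
  assumes "w \<noteq> 0"
  shows "finite {e. c + inner w (lexvec e) = 0}"
proof -
  define p where "p = [:c:] + (\<Sum>i\<in>UNIV. monom (w$i) (lexpos i))"
  have ev: "poly p e = c + inner w (lexvec e)" for e
    by (simp add: p_def poly_sum poly_monom inner_vec_def lexvec_def)
  obtain i0 where i0: "w$i0 \<noteq> 0" using assms by (metis vec_eq_iff zero_index)
  have "coeff p (lexpos i0) = (\<Sum>i\<in>UNIV. if lexpos i0 = lexpos i then w$i else 0)"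
  proof -
    obtain k where k: "lexpos i0 = Suc k" using lexpos_ge1[of i0] by (simp add: lexpos_def)
    show ?thesis by (simp add: p_def coeff_sum k coeff_pCons eq_commute)
  qed
  also have "\<dots> = w$i0"
    using lexpos_inj[where 'n='n] by (simp add: inj_eq sum.delta)
  finally have "p \<noteq> 0" using i0 by auto
  from poly_roots_finite[OF this] show ?thesis by (simp add: ev)
qed



definition Kset :: "real^'d^'n \<Rightarrow> (real^'n) set" where
  "Kset H = {y. (\<forall>i. 0 \<le> y$i) \<and> (\<forall>\<theta>. inner y (H *v \<theta>) = 0)}"

definition supp :: "real^'n \<Rightarrow> 'n set" where
  "supp y = {i. y$i \<noteq> 0}"

definition minK :: "real^'d^'n \<Rightarrow> real^'n \<Rightarrow> bool" where
  "minK H y \<longleftrightarrow> y \<in> Kset H \<and> y \<noteq> 0 \<and>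
     (\<forall>y'\<in>Kset H. y' \<noteq> 0 \<longrightarrow> supp y' \<subseteq> supp y \<longrightarrow> supp y' = supp y)"

lemma minK_uniq:
  fixes H :: "real^'d::finite^'n::finite"
  assumes y: "minK H y" and y': "minK H y'" and s: "supp y = supp y'"
  shows "\<exists>t. y' = t *\<^sub>R y"
proof -
  define S where "S = supp y"
  have yK: "y \<in> Kset H" "y \<noteq> 0" and y'K: "y' \<in> Kset H" "y' \<noteq> 0"
    using y y' by (auto simp: minK_def)
  have "S \<noteq> {}" using yK(2) by (auto simp: S_def supp_def vec_eq_iff)
  have fin: "finite S" by simp
  define r where "r = (\<lambda>i. y'$i / y$i)"
  obtain i0 where i0: "i0 \<in> S" "\<forall>i\<in>S. r i0 \<le> r i"
  proof -
    have "Min (r ` S) \<in> r ` S" using fin \<open>S \<noteq> {}\<close> by simp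
    then obtain i0 where "i0 \<in> S" "r i0 = Min (r ` S)" by auto
    then show ?thesis using that fin by (metis Min_le finite_imageI image_eqI)
  qed
  define t where "t = r i0"
  define z where "z = y' - t *\<^sub>R y"
  have ypos: "0 < y$i" if "i \<in> S" for i
    using that yK(1) by (auto simp: S_def supp_def Kset_def order_le_less)
  have zpos: "0 \<le> z$i" for i
  proof (cases "i \<in> S")
    case True
    have "t \<le> y'$i / y$i" using i0 True by (auto simp: t_def r_def)
    then have "t * y$i \<le> y'$i" using ypos[OF True] by (simp add: pos_le_divide_eq)
    then show ?thesis by (simp add: z_def)
  next
    case False
    then have "y$i = 0" "y'$i = 0" using s by (auto simp: S_def supp_def)
    then show ?thesis by (simp add: z_def)
  qed
  have zK: "z \<in> Kset H"
    unfolding Kset_def mem_Collect_eq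
  proof (intro conjI allI)
    fix i show "0 \<le> z$i" by (rule zpos)
  next
    fix \<theta>
    have "inner y (H *v \<theta>) = 0" "inner y' (H *v \<theta>) = 0"
      using yK(1) y'K(1) by (auto simp: Kset_def)
    then show "inner z (H *v \<theta>) = 0" by (simp add: z_def inner_diff_left)
  qed
  have zsub: "supp z \<subseteq> supp y'"
  proof
    fix i assume "i \<in> supp z"
    then have "z$i \<noteq> 0" by (simp add: supp_def)
    moreover have "y'$i = 0 \<Longrightarrow> y$i = 0" using s by (simp add: supp_def set_eq_iff)
    ultimately show "i \<in> supp y'" by (auto simp: supp_def z_def)
  qed
  have "z$i0 = 0"
    using ypos[OF i0(1)] by (simp add: z_def t_def r_def)
  then have "i0 \<notin> supp z" by (simp add: supp_def)
  have "i0 \<in> supp y'" using i0(1) s by (simp add: S_def)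
  have "z = 0"
  proof (rule ccontr)
    assume "z \<noteq> 0"
    have "\<forall>w\<in>Kset H. w \<noteq> 0 \<longrightarrow> supp w \<subseteq> supp y' \<longrightarrow> supp w = supp y'"
      using y' unfolding minK_def by (elim conjE)
    then have "supp z = supp y'" using zK zsub \<open>z \<noteq> 0\<close> by simp
    then show False using \<open>i0 \<notin> supp z\<close> \<open>i0 \<in> supp y'\<close> by simp
  qed
  then have "y' = t *\<^sub>R y" unfolding z_def by simp
  then show ?thesis by blast
qed

lemma exists_minK:
  fixes H :: "real^'d::finite^'n::finite"
  assumes yK: "y \<in> Kset H" and y0: "y \<noteq> 0" and yx: "inner y x = 0" and xpos: "\<forall>i. 0 \<le> x$i"
  shows "\<exists>y'. minK H y' \<and> inner y' x = 0"
proof -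
  define Z where "Z = (\<lambda>w. w \<in> Kset H \<and> w \<noteq> 0 \<and> inner w x = 0)"
  define m where "m = (\<lambda>w::real^'n. card (supp w))"
  define y1 where "y1 = arg_min m Z"
  have "Z y" using assms by (simp add: Z_def)
  from arg_min_nat_lemma[of Z y m, OF this]
  have Zy1: "Z y1" and least: "\<And>w. Z w \<Longrightarrow> m y1 \<le> m w" by (auto simp: y1_def)
  have y1K: "y1 \<in> Kset H" "y1 \<noteq> 0" "inner y1 x = 0" using Zy1 by (auto simp: Z_def)
  have y1pos: "\<forall>i. 0 \<le> y1$i" using y1K(1) by (simp add: Kset_def)
  have terms: "y1$i * x$i = 0" for i
  proof -
    have "(\<Sum>i\<in>UNIV. y1$i * x$i) = 0" using y1K(3) by (simp add: inner_vec_def)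
    moreover have "\<forall>i\<in>UNIV. 0 \<le> y1$i * x$i" using y1pos xpos by simp
    ultimately show ?thesis by (simp add: sum_nonneg_eq_0_iff)
  qed
  have "minK H y1"
    unfolding minK_def
  proof (intro conjI ballI impI)
    show "y1 \<in> Kset H" "y1 \<noteq> 0" using y1K by auto
  next
    fix w assume wK: "w \<in> Kset H" and w0: "w \<noteq> 0" and ws: "supp w \<subseteq> supp y1"
    have wz: "w$i * x$i = 0" for i
    proof (cases "y1$i = 0")
      case True then have "w$i = 0" using ws by (auto simp: supp_def)
      then show ?thesis by simp
    next
      case False then have "x$i = 0" using terms[of i] by simp
      then show ?thesis by simp
    qed
    have "inner w x = 0" unfolding inner_vec_def inner_real_def
      by (rule sum.neutral) (use wz in auto)
    then have "Z w" using wK w0 by (simp add: Z_def)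
    then have "card (supp y1) \<le> card (supp w)" using least by (simp add: m_def)
    moreover have "card (supp w) \<le> card (supp y1)" using ws by (intro card_mono) auto
    ultimately show "supp w = supp y1" using ws by (intro card_subset_eq) auto
  qed
  then show ?thesis using y1K by blast
qed

lemma gordan:
  fixes H :: "real^'d::finite^'n::finite" and p :: "real^'n"
  assumes feas: "\<forall>i. 0 \<le> (H *v \<theta>0 + p)$i"
    and nopos: "\<forall>\<theta>. \<not> (\<forall>i. 0 < (H *v \<theta> + p)$i)"
  shows "\<exists>y. y \<in> Kset H \<and> y \<noteq> 0 \<and> inner y p = 0"
proof -
  define L where "L = range (\<lambda>\<theta>. H *v \<theta> + p)"
  define Op where "Op = {z::real^'n. \<forall>i. 0 < z$i}"
  define one :: "real^'n" where "one = (\<chi> i. 1)"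
  have cL: "convex L" unfolding L_def convex_def
  proof (intro ballI allI impI)
    fix a b :: "real^'n" and u v :: real assume "a \<in> range (\<lambda>\<theta>. H *v \<theta> + p)" "b \<in> range (\<lambda>\<theta>. H *v \<theta> + p)"
      and uv: "0 \<le> u" "0 \<le> v" "u + v = 1"
    then obtain s t where st: "a = H *v s + p" "b = H *v t + p" by auto
    have "u *\<^sub>R a + v *\<^sub>R b = H *v (u *\<^sub>R s + v *\<^sub>R t) + (u + v) *\<^sub>R p"
      by (simp add: st matrix_vector_right_distrib matrix_vector_mult_scaleR algebra_simps scaleR_add_left)
    also have "\<dots> = H *v (u *\<^sub>R s + v *\<^sub>R t) + p" using uv by simp
    finally show "u *\<^sub>R a + v *\<^sub>R b \<in> range (\<lambda>\<theta>. H *v \<theta> + p)" by blast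
  qed
  have cO: "convex Op" unfolding Op_def convex_def
  proof (intro CollectI allI impI ballI)
    fix x y :: "real^'n" and u v :: real and i
    assume "x \<in> {z. \<forall>i. 0 < z$i}" "y \<in> {z. \<forall>i. 0 < z$i}" and uv: "0 \<le> u" "0 \<le> v" "u + v = 1"
    then have xy: "0 < x$i" "0 < y$i" by auto
    show "0 < (u *\<^sub>R x + v *\<^sub>R y)$i"
    proof (cases "u = 0")
      case True then show ?thesis using uv xy by simp
    next
      case False then have "0 < u" using uv by simp
      then have "0 < u * x$i" using xy by simp
      moreover have "0 \<le> v * y$i" using uv xy by simp
      ultimately show ?thesis by simp
    qed
  qed
  have oneO: "one \<in> Op" by (simp add: Op_def one_def)
  have disj: "L \<inter> Op = {}" using nopos unfolding L_def Op_def by blast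
  obtain a b where a0: "a \<noteq> 0" and aL: "\<forall>x\<in>L. inner a x \<le> b" and aO: "\<forall>z\<in>Op. inner a z \<ge> b"
    using separating_hyperplane_sets[OF cL cO _ _ disj] oneO by (auto simp: L_def)
  have perp: "inner a (H *v \<theta>) = 0" for \<theta>
  proof (rule ccontr)
    assume c0: "inner a (H *v \<theta>) \<noteq> 0"
    define c where "c = inner a (H *v \<theta>)"
    define t where "t = (\<bar>b - inner a p\<bar> + 1) / c"
    have "t * c = \<bar>b - inner a p\<bar> + 1" using c0 by (simp add: t_def c_def)
    moreover have "H *v (t *\<^sub>R \<theta>) + p \<in> L" by (simp add: L_def)
    then have "inner a (H *v (t *\<^sub>R \<theta>) + p) \<le> b" using aL by blast
    then have "t * c + inner a p \<le> b" by (simp add: matrix_vector_mult_scaleR inner_add_right c_def)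
    ultimately show False by linarith
  qed
  have b0: "b \<le> 0"
  proof (rule ccontr)
    assume "\<not> b \<le> 0"
    then have bp: "0 < b" by simp
    define s where "s = inner a one"
    define d where "d = b / (2 * (\<bar>s\<bar> + 1))"
    have dp: "0 < d" using bp by (simp add: d_def)
    have "d *\<^sub>R one \<in> Op" using dp by (simp add: Op_def one_def)
    then have "b \<le> inner a (d *\<^sub>R one)" using aO by blast
    also have "\<dots> = d * s" by (simp add: s_def)
    also have "d * s \<le> d * \<bar>s\<bar>" using dp by (simp add: mult_left_mono)
    also have "d * \<bar>s\<bar> < b"
    proof -
      have "d * \<bar>s\<bar> = b * \<bar>s\<bar> / (2 * (\<bar>s\<bar> + 1))" by (simp add: d_def)
      also have "\<dots> < b" using bp by (simp add: divide_less_eq)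
      finally show ?thesis .
    qed
    finally show False by simp
  qed
  have apos: "0 \<le> a$i" for i
  proof (rule ccontr)
    assume "\<not> 0 \<le> a$i"
    then have ai: "a$i < 0" by simp
    define t where "t = (\<bar>inner a one - b\<bar> + 1) / (- a$i)"
    have tp: "0 < t" using ai unfolding t_def by (intro divide_pos_pos) auto
    have "one + t *\<^sub>R axis i 1 \<in> Op" using tp by (simp add: Op_def one_def axis_def)
    then have "b \<le> inner a (one + t *\<^sub>R axis i 1)" using aO by blast
    also have "\<dots> = inner a one + t * a$i" by (simp add: inner_add_right inner_axis)
    also have "t * a$i = - (\<bar>inner a one - b\<bar> + 1)" using ai by (simp add: t_def)
    finally show False by linarith
  qed
  have "H *v 0 + p \<in> L" unfolding L_def by blast
  then have "inner a p \<le> b" using aL by fastforce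
  have "0 \<le> inner a (H *v \<theta>0 + p)"
    using apos feas by (simp add: inner_vec_def sum_nonneg)
  then have "0 \<le> inner a p" using perp by (simp add: inner_add_right)
  have "a \<in> Kset H" using apos perp by (simp add: Kset_def)
  then show ?thesis using a0 \<open>inner a p \<le> b\<close> b0 \<open>0 \<le> inner a p\<close> by auto
qed



lemma cone_repr:
  fixes M :: "real^'n::finite^'n"
  assumes bij: "bij_betw \<beta> (UNIV :: 'n set) B"
  shows "(\<Sum>j\<in>B. l j *\<^sub>R colA M j) = ((\<chi> k i. colA M (\<beta> i) $ k) :: real^'n^'n) *v (\<chi> i. l (\<beta> i))"
proof -
  have "(\<Sum>j\<in>B. l j *\<^sub>R colA M j) = (\<Sum>i\<in>UNIV. l (\<beta> i) *\<^sub>R colA M (\<beta> i))"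
    using sum.reindex_bij_betw[OF bij, of "\<lambda>j. l j *\<^sub>R colA M j"] by simp
  also have "\<dots> = ((\<chi> k i. colA M (\<beta> i) $ k) :: real^'n^'n) *v (\<chi> i. l (\<beta> i))"
    unfolding matrix_mult_sum scalar_mult_eq_scaleR
    by (rule sum.cong) (auto simp: column_def vec_eq_iff)
  finally show ?thesis .
qed

theorem mainTheorem9:
  fixes M :: "(real^('n::{finite,wellorder}))^('n::{finite,wellorder})"
    and Q :: "(real^('d::finite))^('n::{finite,wellorder})"
    and q :: "real^('n::{finite,wellorder})"
    and B :: "('n::{finite,wellorder} + 'n) set"
  assumes "compl_basis M B"
  shows "finite {e::real. Seps Q q e \<inter> compl_cone M B \<noteq> {} \<and>
                          Seps Q q e \<inter> interior (compl_cone M B) = {}}"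
proof -
  obtain \<beta> where bij: "bij_betw \<beta> UNIV B"
    and inv: "invertible ((\<chi> k i. colA M (\<beta> i) $ k) :: real^('n::{finite,wellorder})^('n::{finite,wellorder}))"
    using assms unfolding compl_basis_def by blast
  define N where "N = ((\<chi> k i. colA M (\<beta> i) $ k) :: real^('n::{finite,wellorder})^('n::{finite,wellorder}))"
  obtain G where NG: "N ** G = mat 1" and GN: "G ** N = mat 1"
    using inv unfolding invertible_def N_def by blast
  define Cn where "Cn = compl_cone M B"
  have C1: "\<forall>i. 0 \<le> (G *v s)$i" if sC: "s \<in> Cn" for s
  proof -
    obtain l where s: "s = (\<Sum>j\<in>B. l j *\<^sub>R colA M j)" and l: "\<forall>j\<in>B. l j \<ge> 0"
      using sC by (auto simp: Cn_def compl_cone_def)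
    have "s = N *v (\<chi> i. l (\<beta> i))" using s cone_repr[OF bij] by (simp add: N_def)
    then have "G *v s = (\<chi> i. l (\<beta> i))" by (simp add: matrix_vector_mul_assoc GN)
    moreover have "\<beta> i \<in> B" for i using bij by (auto simp: bij_betw_def)
    ultimately show ?thesis using l by simp
  qed
  define Op where "Op = {s. \<forall>i. 0 < (G *v s)$i}"
  have "Op = (\<Inter>i. {s. 0 < (G *v s)$i})" by (auto simp: Op_def)
  moreover have "open {s. 0 < (G *v s)$i}" for i
    by (intro open_Collect_less continuous_intros)
  ultimately have oOp: "open Op" by (simp add: open_INT)
  have OpC: "Op \<subseteq> Cn"
  proof
    fix s assume sO: "s \<in> Op"
    define l where "l = (\<lambda>j. (G *v s) $ (inv_into UNIV \<beta> j))"
    have lb: "(\<chi> i. l (\<beta> i)) = G *v s"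
      using bij by (simp add: l_def vec_eq_iff bij_betw_inv_into_left)
    have "s = N *v (G *v s)" by (simp add: matrix_vector_mul_assoc NG)
    also have "\<dots> = (\<Sum>j\<in>B. l j *\<^sub>R colA M j)" using cone_repr[OF bij, of l] lb by (simp add: N_def)
    finally have "s = (\<Sum>j\<in>B. l j *\<^sub>R colA M j)" .
    moreover have "\<forall>j\<in>B. l j \<ge> 0" using sO by (auto simp: Op_def l_def less_imp_le)
    ultimately show "s \<in> Cn" by (auto simp: Cn_def compl_cone_def)
  qed
  then have OpI: "Op \<subseteq> interior Cn" using oOp by (rule interior_maximal)
  define H where "H = G ** Q"
  define P where "P = (\<lambda>e. G *v q + G *v lexvec e)"
  have GS: "G *v (Q *v \<theta> + q + lexvec e) = H *v \<theta> + P e" for \<theta> e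
    by (simp add: H_def P_def matrix_vector_right_distrib matrix_vector_mul_assoc)
  define R where "R = (\<lambda>S. {e. \<exists>y. minK H y \<and> supp y = S \<and> inner y (P e) = 0})"
  have finR: "finite (R S)" for S
  proof (cases "\<exists>y0. minK H y0 \<and> supp y0 = S")
    case False then have "R S = {}" by (auto simp: R_def)
    then show ?thesis by simp
  next
    case True
    then obtain y0 where y0: "minK H y0" "supp y0 = S" by blast
    have y00: "y0 \<noteq> 0" using y0 by (simp add: minK_def)
    have w0: "y0 v* G \<noteq> 0"
    proof
      assume "y0 v* G = 0"
      then have "(y0 v* G) v* N = 0" by simp
      then show False using y00 by (simp add: vector_matrix_mul_assoc GN)
    qed
    have "R S \<subseteq> {e. inner y0 (G *v q) + inner (y0 v* G) (lexvec e) = 0}"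
    proof
      fix e assume "e \<in> R S"
      then obtain y where y: "minK H y" "supp y = S" "inner y (P e) = 0" by (auto simp: R_def)
      obtain t where t: "y = t *\<^sub>R y0" using minK_uniq[OF y0(1) y(1)] y0(2) y(2) by auto
      have "t \<noteq> 0" using y(1) t by (auto simp: minK_def)
      then have "inner y0 (P e) = 0" using y(3) t by simp
      then show "e \<in> {e. inner y0 (G *v q) + inner (y0 v* G) (lexvec e) = 0}"
        by (simp add: P_def inner_add_right dot_lmul_matrix)
    qed
    then show ?thesis using poly_fin[OF w0] finite_subset by blast
  qed
  have "{e::real. Seps Q q e \<inter> compl_cone M B \<noteq> {} \<and>
                          Seps Q q e \<inter> interior (compl_cone M B) = {}} \<subseteq> (\<Union>S. R S)"
  proof
    fix e assume "e \<in> {e::real. Seps Q q e \<inter> compl_cone M B \<noteq> {} \<and>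
                          Seps Q q e \<inter> interior (compl_cone M B) = {}}"
    then have e1: "Seps Q q e \<inter> Cn \<noteq> {}" and e2: "Seps Q q e \<inter> interior Cn = {}"
      by (auto simp: Cn_def)
    obtain \<theta>0 where "Q *v \<theta>0 + q + lexvec e \<in> Cn" using e1 by (auto simp: Seps_def)
    then have feas: "\<forall>i. 0 \<le> (H *v \<theta>0 + P e)$i" using C1 GS by metis
    have nopos: "\<forall>\<theta>. \<not> (\<forall>i. 0 < (H *v \<theta> + P e)$i)"
    proof (intro allI notI)
      fix \<theta> assume "\<forall>i. 0 < (H *v \<theta> + P e)$i"
      then have "Q *v \<theta> + q + lexvec e \<in> Op" by (simp add: Op_def GS)
      then have "Q *v \<theta> + q + lexvec e \<in> interior Cn" using OpI by blast
      moreover have "Q *v \<theta> + q + lexvec e \<in> Seps Q q e" by (auto simp: Seps_def)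
      ultimately show False using e2 by blast
    qed
    obtain y where yK: "y \<in> Kset H" "y \<noteq> 0" "inner y (P e) = 0"
      using gordan[OF feas nopos] by blast
    have "inner y (H *v \<theta>0) = 0" using yK(1) by (simp add: Kset_def)
    then have "inner y (H *v \<theta>0 + P e) = 0" using yK(3) by (simp add: inner_add_right)
    from exists_minK[OF yK(1,2) this feas] obtain y' where y': "minK H y'" "inner y' (H *v \<theta>0 + P e) = 0"
      by blast
    have "inner y' (H *v \<theta>0) = 0" using y'(1) by (simp add: minK_def Kset_def)
    then have "inner y' (P e) = 0" using y'(2) by (simp add: inner_add_right)
    then have "e \<in> R (supp y')" using y'(1) by (auto simp: R_def)
    then show "e \<in> (\<Union>S. R S)" by blast
  qed
  moreover have "finite (\<Union>S. R S)" by (intro finite_UN_I) (auto simp: finR)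
  ultimately show ?thesis by (rule finite_subset)
qed


end
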